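(* Let $l$ be a projective line in $\mathbb{CP}^3$. Then $l$ corresponds to a two-sphere (or a point) contained in the three-sphere $S^3$ if and only if $l=l^\perp$ with respect to the hermitian form $h$ on $\mathbb{C}^4$.
   Context: $\mathbb{H}$ denotes the quaternions, $\mathbb{H}=\mathbb{C}\oplus j\mathbb{C}$; $\mathbb{H}^2$ is a right $\mathbb{H}$-vector space identified with $\mathbb{C}^4$; $\mathbb{HP}^1=\{v\mathbb{H}\}\cong S^4$, $\mathbb{CP}^3=\mathbb{P}(\mathbb{C}^4)$. Under the twistor projection $v\mathbb{C}\mapsto v\mathbb{H}$, each projective line of $\mathbb{CP}^3$ is either a twistor fibre (the line through $[v],[vj]$, corresponding to the point $v\mathbb{H}$) or the twistor lift of a round two-sphere, whose image under the projection is that two-sphere. Fix an $\mathbb{H}$-basis $e_1,e_2$ and the quaternionic hermitian form $\mathfrak{h}(e_1a+e_2b,e_1c+e_2d)=\bar a d+\bar b c$; write $\mathfrak{h}=h+j\omega$ with $h,\omega$ $\mathbb{C}$-valued; $h$ is a hermitian form on $\mathbb{C}^4$. $S^3=\{x\mathbb{H}:\mathfrak{h}(x,x)=0\}$. For a projective line $l$, $l^\perp=\mathbb{P}\{x:h(x,y)=0\ \forall y\in l\}$. A line "corresponds to a two-sphere or point contained in $S^3$" if its image under the twistor projection is contained in $S^3$. *)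

theory Defs
  imports "HOL-Analysis.Analysis"
begin

text \<open>Quaternions H = C + jC: the pair (z,w) stands for z + j w.
  Multiplication: (z1 + j w1)(z2 + j w2) = (z1 z2 - conj w1 w2) + j (conj z1 w2 + w1 z2),
  using z j = j (conj z).\<close>

type_synonym quat = "complex \<times> complex"

definition qmult :: "quat \<Rightarrow> quat \<Rightarrow> quat" where
  "qmult p q = (fst p * fst q - cnj (snd p) * snd q, cnj (fst p) * snd q + snd p * fst q)"

definition qadd :: "quat \<Rightarrow> quat \<Rightarrow> quat" where
  "qadd p q = (fst p + fst q, snd p + snd q)"

definition qconj :: "quat \<Rightarrow> quat" where
  "qconj p = (cnj (fst p), - snd p)"

text \<open>H^2 = e1 H + e2 H identified with C^4: e1 (a1 + j a2) + e2 (b1 + j b2)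
  corresponds to (a1, a2, b1, b2).  The complex structure is right multiplication
  by complex scalars, i.e. componentwise scalar multiplication.\<close>

type_synonym C4 = "complex ^ 4"

definition coordA :: "C4 \<Rightarrow> quat" where "coordA x = (x $ 1, x $ 2)"
definition coordB :: "C4 \<Rightarrow> quat" where "coordB x = (x $ 3, x $ 4)"

definition mkC4 :: "quat \<Rightarrow> quat \<Rightarrow> C4" where
  "mkC4 a b = vector [fst a, snd a, fst b, snd b]"

definition rmul :: "C4 \<Rightarrow> quat \<Rightarrow> C4" where
  "rmul x q = mkC4 (qmult (coordA x) q) (qmult (coordB x) q)"

text \<open>The quaternionic hermitian form h(e1 a + e2 b, e1 c + e2 d) = conj a d + conj b c,
  and its complex part h (where hq = h + j omega).\<close>
definition hq :: "C4 \<Rightarrow> C4 \<Rightarrow> quat" where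
  "hq x y = qadd (qmult (qconj (coordA x)) (coordB y)) (qmult (qconj (coordB x)) (coordA y))"

definition hform :: "C4 \<Rightarrow> C4 \<Rightarrow> complex" where
  "hform x y = fst (hq x y)"

text \<open>Points of CP^3 (complex lines vC) and of HP^1 (quaternionic lines vH).\<close>
definition cpt :: "C4 \<Rightarrow> C4 set" where
  "cpt v = range (\<lambda>c::complex. c *s v)"

definition hpt :: "C4 \<Rightarrow> C4 set" where
  "hpt v = range (\<lambda>q. rmul v q)"

definition CP3 :: "C4 set set" where
  "CP3 = {cpt v | v. v \<noteq> 0}"

definition cindep2 :: "C4 \<Rightarrow> C4 \<Rightarrow> bool" where
  "cindep2 u v \<longleftrightarrow> (\<forall>a b::complex. a *s u + b *s v = 0 \<longrightarrow> a = 0 \<and> b = 0)"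

definition cspan2 :: "C4 \<Rightarrow> C4 \<Rightarrow> C4 set" where
  "cspan2 u v = {a *s u + b *s v | a b::complex. True}"

definition is_proj_line :: "C4 set set \<Rightarrow> bool" where
  "is_proj_line l \<longleftrightarrow> (\<exists>u v. cindep2 u v \<and> l = {cpt x | x. x \<in> cspan2 u v \<and> x \<noteq> 0})"

definition hperp :: "C4 set set \<Rightarrow> C4 set set" where
  "hperp l = {cpt x | x. x \<noteq> 0 \<and> (\<forall>p\<in>l. \<forall>y\<in>p. hform x y = 0)}"

definition twistor_img :: "C4 set set \<Rightarrow> C4 set set" where
  "twistor_img l = {hpt v | v. v \<noteq> 0 \<and> cpt v \<in> l}"

definition S3 :: "C4 set set" where
  "S3 = {hpt x | x. x \<noteq> 0 \<and> hq x x = (0, 0)}"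

end

theory Submission imports Defs begin
lemma mkC4_comp: "mkC4 a b $ 1 = fst a" "mkC4 a b $ 2 = snd a" "mkC4 a b $ 3 = fst b" "mkC4 a b $ 4 = snd b"
  unfolding mkC4_def vector_def by simp_all

lemma hform_eq: "hform x y = cnj (x$1) * y$3 + cnj (x$2) * y$4 + cnj (x$3) * y$1 + cnj (x$4) * y$2"
  unfolding hform_def hq_def qadd_def qmult_def qconj_def coordA_def coordB_def by simp

lemma hq_self: "hq x x = (0,0) \<longleftrightarrow> hform x x = 0"
  unfolding hform_def hq_def qadd_def qmult_def qconj_def coordA_def coordB_def by (simp add: algebra_simps)

lemma rmul_comp: "rmul x q $ 1 = x$1 * fst q - cnj (x$2) * snd q"
  "rmul x q $ 2 = cnj (x$1) * snd q + x$2 * fst q"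
  "rmul x q $ 3 = x$3 * fst q - cnj (x$4) * snd q"
  "rmul x q $ 4 = cnj (x$3) * snd q + x$4 * fst q"
  unfolding rmul_def mkC4_comp qmult_def coordA_def coordB_def by simp_all

lemma hform_rmul: "hform (rmul x q) (rmul x q) = ((cmod (fst q))^2 + (cmod (snd q))^2) * hform x x"
  unfolding hform_eq rmul_comp
  by (simp add: complex_eq_iff cmod_def power2_eq_square algebra_simps)

lemma hform_add_l: "hform (x + y) t = hform x t + hform y t"
  by (simp add: hform_eq algebra_simps)
lemma hform_add_r: "hform t (x + y) = hform t x + hform t y"
  by (simp add: hform_eq algebra_simps)
lemma hform_diff_l: "hform (x - y) t = hform x t - hform y t"
  by (simp add: hform_eq algebra_simps)
lemma hform_scale_l: "hform (c *s x) t = cnj c * hform x t"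
  by (simp add: hform_eq algebra_simps)
lemma hform_scale_r: "hform t (c *s x) = c * hform t x"
  by (simp add: hform_eq algebra_simps)
lemma hform_sym: "hform y x = cnj (hform x y)"
  by (simp add: hform_eq algebra_simps)
lemma hform_zero_r: "hform t 0 = 0"
  by (simp add: hform_eq)

lemma hform_nondeg: assumes "\<And>t. hform w t = 0" shows "w = 0"
proof -
  have h: "hform w (axis i 1) = 0" for i using assms by blast
  have "cnj (w$1) = 0" "cnj (w$2) = 0" "cnj (w$3) = 0" "cnj (w$4) = 0"
    using h[of 3] h[of 4] h[of 1] h[of 2] by (simp_all add: hform_eq axis_def)
  thus ?thesis by (simp add: vec_eq_iff forall_4)
qed

lemma annih_span: assumes "\<forall>t\<in>T. hform w t = 0" shows "\<forall>t\<in>vec.span T. hform w t = 0"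
proof -
  have "vec.span T \<subseteq> {t. hform w t = 0}"
    apply (rule vec.span_minimal)
    using assms apply blast
    unfolding vec.subspace_def by (auto simp: hform_add_r hform_scale_r hform_zero_r)
  thus ?thesis by blast
qed

lemma cindep2_D: assumes "cindep2 u v" shows "u \<noteq> 0" "v \<noteq> 0" "u \<noteq> v"
proof -
  show "u \<noteq> 0"
  proof
    assume "u = 0"
    hence "1 *s u + 0 *s v = 0" by simp
    thus False using assms unfolding cindep2_def by fastforce
  qed
  show "v \<noteq> 0"
  proof
    assume "v = 0"
    hence "0 *s u + 1 *s v = 0" by simp
    thus False using assms unfolding cindep2_def by fastforce
  qed
  show "u \<noteq> v"
  proof
    assume "u = v"
    hence "1 *s u + (-1) *s v = 0" by (simp add: vector_sneg_minus1[symmetric])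
    thus False using assms unfolding cindep2_def by fastforce
  qed
qed

lemma span2_eq: "vec.span {u, v} = cspan2 u v"
proof -
  have "vec.span {u, v} = {x. \<exists>k ka. x - k *s u = ka *s v}"
    by (auto simp add: vec.span_insert vec.span_singleton)
  also have "\<dots> = cspan2 u v"
    unfolding cspan2_def by (auto simp: algebra_simps)
  finally show ?thesis .
qed

lemma key:
  assumes ind: "cindep2 u v" and huu: "hform u u = 0" and huv: "hform u v = 0"
    and hvu: "hform v u = 0" and hvv: "hform v v = 0"
    and hyu: "hform y u = 0" and hyv: "hform y v = 0"
  shows "y \<in> cspan2 u v"
proof (rule ccontr)
  assume ny: "y \<notin> cspan2 u v"
  note D = cindep2_D[OF ind]
  have uin: "u \<in> cspan2 u v" unfolding cspan2_def by (rule CollectI, rule exI[of _ 1], rule exI[of _ 0]) simp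
  have vin: "v \<in> cspan2 u v" unfolding cspan2_def by (rule CollectI, rule exI[of _ 0], rule exI[of _ 1]) simp
  have yu: "y \<noteq> u" "y \<noteq> v" using ny uin vin by auto
  have iv: "vec.independent {v}" using D by (simp add: vec.independent_insert)
  have "u \<notin> vec.span {v}"
  proof
    assume "u \<in> vec.span {v}"
    then obtain k where "u = k *s v" by (auto simp: vec.span_singleton)
    hence "1 *s u + (- k) *s v = 0" by (simp add: vector_sneg_minus1[symmetric] vector_smult_assoc)
    thus False using ind unfolding cindep2_def by fastforce
  qed
  hence i2: "vec.independent {u, v}" using iv D by (simp add: vec.independent_insert)
  have i3: "vec.independent {y, u, v}"
    using i2 ny yu by (simp add: vec.independent_insert span2_eq)
  have c3: "card {y, u, v} = 3" using yu D by simp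
  have "vec.dim (vec.span {y, u, v}) = 3" using i3 c3 vec.dim_span_eq_card_independent by metis
  note d3 = this
  have d4: "vec.dim (UNIV :: C4 set) = 4" by (simp add: vec.dim_UNIV card_cart_basis)
  have "vec.span {y, u, v} \<noteq> UNIV"
  proof
    assume e: "vec.span {y, u, v} = UNIV"
    have "vec.dim (vec.span {y, u, v}) = vec.dim (UNIV :: C4 set)" by (simp only: e)
    thus False using d3 d4 by simp
  qed
  then obtain z where nz: "z \<notin> vec.span {y, u, v}" by auto
  have zn: "z \<notin> {y, u, v}"
  proof
    assume "z \<in> {y, u, v}"
    hence "z \<in> vec.span {y, u, v}" by (rule vec.span_base)
    with nz show False by simp
  qed
  have i4: "vec.independent {z, y, u, v}" using i3 nz zn by (simp add: vec.independent_insert)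
  have c4: "card {z, y, u, v} = 4" using c3 zn by simp
  have "(UNIV :: C4 set) \<subseteq> vec.span {z, y, u, v}"
    using vec.card_eq_dim[of "{z, y, u, v}" UNIV] i4 c4 d4 by simp
  hence sp: "\<forall>t. t \<in> vec.span {z, y, u, v}" by blast
  define \<alpha> where "\<alpha> = hform u z"
  define \<beta> where "\<beta> = hform v z"
  define w where "w = cnj \<beta> *s u - cnj \<alpha> *s v"
  have huy: "hform u y = 0" "hform v y = 0" using hyu hyv hform_sym[of u y] hform_sym[of v y] by auto
  have "\<forall>t\<in>{z, y, u, v}. hform w t = 0"
    unfolding w_def using huu huv hvu hvv huy
    by (auto simp: hform_diff_l hform_scale_l \<alpha>_def \<beta>_def)
  hence "\<forall>t. hform w t = 0" using annih_span sp by blast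
  hence "w = 0" using hform_nondeg by blast
  hence "cnj \<beta> *s u + (- cnj \<alpha>) *s v = 0" unfolding w_def
    by (simp add: vector_sneg_minus1[symmetric] vector_smult_assoc)
  hence "cnj \<beta> = 0" "- cnj \<alpha> = 0" using ind unfolding cindep2_def by blast+
  hence "\<alpha> = 0" "\<beta> = 0" by auto
  hence "\<forall>t\<in>{z, y, u, v}. hform u t = 0" using huu huv huy by (auto simp: \<alpha>_def)
  hence "\<forall>t. hform u t = 0" using annih_span sp by blast
  hence "u = 0" using hform_nondeg by blast
  thus False using D by simp
qed

lemma cpt_mem: "y \<in> cpt x \<longleftrightarrow> (\<exists>c. y = c *s x)"
  by (auto simp: cpt_def)

lemma cpt_self: "x \<in> cpt x"
  unfolding cpt_mem by (rule exI[of _ 1]) simp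

lemma hpt_self: "x \<in> hpt x"
proof -
  have "rmul x (1, 0) = x" by (simp add: vec_eq_iff forall_4 rmul_comp)
  thus ?thesis unfolding hpt_def by (metis rangeI)
qed

lemma cspan2_scale: "x \<in> cspan2 u v \<Longrightarrow> c *s x \<in> cspan2 u v"
  unfolding cspan2_def by (auto simp: vector_add_ldistrib vector_smult_assoc) blast

lemma cspan2_zero: "0 \<in> cspan2 u v"
  unfolding cspan2_def by (rule CollectI, rule exI[of _ 0], rule exI[of _ 0]) simp

theorem mainTheorem7:
  fixes l :: "C4 set set"
  assumes "is_proj_line l"
  shows "twistor_img l \<subseteq> S3 \<longleftrightarrow> l = hperp l"
proof -
  obtain u v where ind: "cindep2 u v" and l: "l = {cpt x | x. x \<in> cspan2 u v \<and> x \<noteq> 0}"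
    using assms unfolding is_proj_line_def by blast
  note D = cindep2_D[OF ind]
  have uin: "u \<in> cspan2 u v" unfolding cspan2_def by (rule CollectI, rule exI[of _ 1], rule exI[of _ 0]) simp
  have vin: "v \<in> cspan2 u v" unfolding cspan2_def by (rule CollectI, rule exI[of _ 0], rule exI[of _ 1]) simp
  have pts: "y \<in> cspan2 u v" if pl: "p \<in> l" and yp: "y \<in> p" for p y
  proof -
    obtain x where "p = cpt x" "x \<in> cspan2 u v" using pl l by blast
    thus ?thesis using yp cspan2_scale by (auto simp: cpt_mem)
  qed
  have cu: "cpt u \<in> l" "cpt v \<in> l" using l uin vin D by blast+
  show ?thesis
  proof
    assume L: "twistor_img l \<subseteq> S3"
    have iso: "hform x x = 0" if x: "x \<in> cspan2 u v" for x
    proof (cases "x = 0")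
      case True thus ?thesis by (simp add: hform_zero_r)
    next
      case False
      hence "cpt x \<in> l" using l x by blast
      hence "hpt x \<in> twistor_img l" using False unfolding twistor_img_def by blast
      hence "hpt x \<in> S3" using L by blast
      then obtain y where y: "hpt x = hpt y" "hq y y = (0, 0)" unfolding S3_def by blast
      have "x \<in> hpt y" using hpt_self[of x] y(1) by simp
      then obtain q where "x = rmul y q" unfolding hpt_def by blast
      thus ?thesis using hform_rmul y(2) hq_self by simp
    qed
    have huu: "hform u u = 0" and hvv: "hform v v = 0" using iso uin vin by auto
    have "hform (u + v) (u + v) = 0" using iso uin vin unfolding cspan2_def
      by (metis (mono_tags, lifting) CollectI vector_smult_lid)
    hence e1: "hform u v + hform v u = 0"
      using huu hvv by (simp add: hform_add_l hform_add_r add.commute)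
    have "hform (u + \<i> *s v) (u + \<i> *s v) = 0" using iso unfolding cspan2_def
      by (metis (mono_tags, lifting) CollectI vector_smult_lid)
    hence e2: "\<i> * hform u v - \<i> * hform v u = 0"
      using huu hvv by (simp add: hform_add_l hform_add_r hform_scale_l hform_scale_r algebra_simps)
    have huv: "hform u v = 0" and hvu: "hform v u = 0" using e1 e2
      by (auto simp: algebra_simps)
    have orth: "hform a b = 0" if "a \<in> cspan2 u v" "b \<in> cspan2 u v" for a b
      using that huu hvv huv hvu unfolding cspan2_def
      by (auto simp: hform_add_l hform_add_r hform_scale_l hform_scale_r)
    show "l = hperp l"
    proof
      show "l \<subseteq> hperp l"
      proof
        fix p assume "p \<in> l"
        then obtain x where x: "p = cpt x" "x \<in> cspan2 u v" "x \<noteq> 0" using l by blast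
        have "\<forall>q\<in>l. \<forall>y\<in>q. hform x y = 0" using orth x(2) pts by blast
        thus "p \<in> hperp l" unfolding hperp_def using x by blast
      qed
    next
      show "hperp l \<subseteq> l"
      proof
        fix p assume "p \<in> hperp l"
        then obtain x where x: "p = cpt x" "x \<noteq> 0" "\<forall>q\<in>l. \<forall>y\<in>q. hform x y = 0"
          unfolding hperp_def by blast
        have "hform x u = 0" "hform x v = 0" using x(3) cu cpt_self by blast+
        hence "x \<in> cspan2 u v" using key[OF ind huu huv hvu hvv] by blast
        thus "p \<in> l" using l x by blast
      qed
    qed
  next
    assume R: "l = hperp l"
    show "twistor_img l \<subseteq> S3"
    proof
      fix P assume "P \<in> twistor_img l"
      then obtain w where w: "P = hpt w" "w \<noteq> 0" "cpt w \<in> l" unfolding twistor_img_def by blast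
      have "cpt w \<in> hperp l" using w(3) by (simp only: R[symmetric])
      then obtain x where x: "cpt w = cpt x" "x \<noteq> 0" "\<forall>q\<in>l. \<forall>y\<in>q. hform x y = 0"
        unfolding hperp_def by blast
      have hxw: "hform x w = 0" using x(3) w(3) cpt_self by blast
      have "w \<in> cpt x" using cpt_self[of w] x(1) by simp
      then obtain c where "w = c *s x" by (auto simp: cpt_mem)
      hence "hform w w = 0" using hxw by (simp add: hform_scale_l)
      hence "hq w w = (0, 0)" using hq_self by blast
      thus "P \<in> S3" unfolding S3_def using w by blast
    qed
  qed
qed
end
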